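(* Let $N_1,N_2$ be continuous fuzzy negations and $U_1,U_2$ disjunctive uninorms with neutral elements $e_1,e_2\in\,]0,1[$ respectively, such that $U_1(N_1(x),y)=U_2(N_2(x),y)$ for all $x,y\in[0,1]$. If $U_1$ has continuous underlying functions and $N_1\neq N_2$, then $U_2$ also has continuous underlying functions, and there exist idempotent points $a,d\in[0,1]$ of $U_1$ with $a<d$ such that the restriction of $U_1$ to $]a,d[^2$, and likewise the restriction of $U_2$ to $]a,d[^2$, is a linear transformation of some representable uninorm restricted to $]0,1[^2$. Moreover, $U_1$ coincides with $U_2$ on $([0,a]\cup[d,1])^2$.
   Context: A fuzzy negation is a non-increasing map $N:[0,1]\to[0,1]$ with $N(0)=1$, $N(1)=0$. A uninorm is a map $U:[0,1]^2\to[0,1]$ that is commutative, associative, non-decreasing in each variable, and has a neutral element $e\in[0,1]$; it is disjunctive if $U(1,0)=1$. For a uninorm with neutral element $e\in\,]0,1[$, the underlying t-norm is $T_U(x,y)=U(ex,ey)/e$ and the underlying t-conorm is $S_U(x,y)=(U(e+(1-e)x,e+(1-e)y)-e)/(1-e)$, $x,y\in[0,1]$; $U$ has continuous underlying functions if both are continuous. An idempotent point of $U$ is $z$ with $U(z,z)=z$. A uninorm $V$ with neutral element $e\in\,]0,1[$ is representable if there is a continuous strictly increasing $h:[0,1]\to[-\infty,+\infty]$ with $h(0)=-\infty$, $h(e)=0$, $h(1)=+\infty$ and $V(x,y)=h^{-1}(h(x)+h(y))$ for $(x,y)\notin\{(0,1),(1,0)\}$. The restriction of $U$ to $]a,d[^2$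 is a linear transformation of $V$ restricted to $]0,1[^2$ if $U(x,y)=a+(d-a)V\big(\frac{x-a}{d-a},\frac{y-a}{d-a}\big)$ for all $x,y\in\,]a,d[$. *)

theory Defs
  imports "HOL-Analysis.Analysis" "HOL-Library.Extended_Real"
begin

text \<open>All operations are real functions; only their values on [0,1] are relevant.\<close>

definition fuzzy_negation :: "(real \<Rightarrow> real) \<Rightarrow> bool" where
  "fuzzy_negation N \<longleftrightarrow>
     (\<forall>x\<in>{0..1}. N x \<in> {0..1}) \<and>
     (\<forall>x\<in>{0..1}. \<forall>y\<in>{0..1}. x \<le> y \<longrightarrow> N y \<le> N x) \<and>
     N 0 = 1 \<and> N 1 = 0"

definition uninorm :: "(real \<Rightarrow> real \<Rightarrow> real) \<Rightarrow> real \<Rightarrow> bool" where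
  "uninorm U e \<longleftrightarrow>
     e \<in> {0..1} \<and>
     (\<forall>x\<in>{0..1}. \<forall>y\<in>{0..1}. U x y \<in> {0..1}) \<and>
     (\<forall>x\<in>{0..1}. \<forall>y\<in>{0..1}. U x y = U y x) \<and>
     (\<forall>x\<in>{0..1}. \<forall>y\<in>{0..1}. \<forall>z\<in>{0..1}. U (U x y) z = U x (U y z)) \<and>
     (\<forall>x\<in>{0..1}. \<forall>x'\<in>{0..1}. \<forall>y\<in>{0..1}. x \<le> x' \<longrightarrow> U x y \<le> U x' y) \<and>
     (\<forall>x\<in>{0..1}. U e x = x)"

definition disjunctive :: "(real \<Rightarrow> real \<Rightarrow> real) \<Rightarrow> bool" where
  "disjunctive U \<longleftrightarrow> U 1 0 = 1"

definition underlying_tnorm :: "(real \<Rightarrow> real \<Rightarrow> real) \<Rightarrow> real \<Rightarrow> real \<Rightarrow> real \<Rightarrow> real" where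
  "underlying_tnorm U e x y = U (e * x) (e * y) / e"

definition underlying_tconorm :: "(real \<Rightarrow> real \<Rightarrow> real) \<Rightarrow> real \<Rightarrow> real \<Rightarrow> real \<Rightarrow> real" where
  "underlying_tconorm U e x y = (U (e + (1 - e) * x) (e + (1 - e) * y) - e) / (1 - e)"

definition continuous_underlying :: "(real \<Rightarrow> real \<Rightarrow> real) \<Rightarrow> real \<Rightarrow> bool" where
  "continuous_underlying U e \<longleftrightarrow>
     continuous_on ({0..1} \<times> {0..1}) (\<lambda>(x, y). underlying_tnorm U e x y) \<and>
     continuous_on ({0..1} \<times> {0..1}) (\<lambda>(x, y). underlying_tconorm U e x y)"

definition idempotent_point :: "(real \<Rightarrow> real \<Rightarrow> real) \<Rightarrow> real \<Rightarrow> bool" where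
  "idempotent_point U z \<longleftrightarrow> z \<in> {0..1} \<and> U z z = z"

definition representable :: "(real \<Rightarrow> real \<Rightarrow> real) \<Rightarrow> real \<Rightarrow> bool" where
  "representable V e \<longleftrightarrow> uninorm V e \<and> 0 < e \<and> e < 1 \<and>
     (\<exists>h :: real \<Rightarrow> ereal.
        continuous_on {0..1} h \<and> strict_mono_on {0..1} h \<and>
        h 0 = -\<infinity> \<and> h e = 0 \<and> h 1 = \<infinity> \<and>
        (\<forall>x\<in>{0..1}. \<forall>y\<in>{0..1}. (x, y) \<notin> {(0, 1), (1, 0)} \<longrightarrow>
            V x y = the_inv_into {0..1} h (h x + h y)))"

definition linear_transform_on :: "(real \<Rightarrow> real \<Rightarrow> real) \<Rightarrow> real \<Rightarrow> real \<Rightarrow> (real \<Rightarrow> real \<Rightarrow> real) \<Rightarrow> bool" where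
  "linear_transform_on U a d V \<longleftrightarrow>
     (\<forall>x\<in>{a<..<d}. \<forall>y\<in>{a<..<d}.
        U x y = a + (d - a) * V ((x - a) / (d - a)) ((y - a) / (d - a)))"

end

theory Submission
  imports Defs
begin

fun npow :: "(real \<Rightarrow> real \<Rightarrow> real) \<Rightarrow> real \<Rightarrow> real \<Rightarrow> nat \<Rightarrow> real" where
  "npow op e x 0 = e"
| "npow op e x (Suc n) = op x (npow op e x n)"

locale cmon =
  fixes A :: "real set" and op :: "real \<Rightarrow> real \<Rightarrow> real" and e :: real
  assumes cl: "x \<in> A \<Longrightarrow> y \<in> A \<Longrightarrow> op x y \<in> A"
    and assoc: "x \<in> A \<Longrightarrow> y \<in> A \<Longrightarrow> z \<in> A \<Longrightarrow> op (op x y) z = op x (op y z)"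
    and comm: "x \<in> A \<Longrightarrow> y \<in> A \<Longrightarrow> op x y = op y x"
    and e_in: "e \<in> A"
    and neut: "x \<in> A \<Longrightarrow> op e x = x"
    and mono: "x \<in> A \<Longrightarrow> y \<in> A \<Longrightarrow> z \<in> A \<Longrightarrow> x \<le> y \<Longrightarrow> op x z \<le> op y z"
begin

lemma neut2: "x \<in> A \<Longrightarrow> op x e = x"
  using comm[OF _ e_in] neut by simp

lemma mono2: "x \<in> A \<Longrightarrow> y \<in> A \<Longrightarrow> z \<in> A \<Longrightarrow> x \<le> y \<Longrightarrow> op z x \<le> op z y"
  using mono comm by metis

lemma mono12: "x \<in> A \<Longrightarrow> y \<in> A \<Longrightarrow> x' \<in> A \<Longrightarrow> y' \<in> A \<Longrightarrow> x \<le> x' \<Longrightarrow> y \<le> y' \<Longrightarrow> op x y \<le> op x' y'"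
  by (meson cl mono mono2 order_trans)

lemma lcomm: "x \<in> A \<Longrightarrow> y \<in> A \<Longrightarrow> z \<in> A \<Longrightarrow> op x (op y z) = op y (op x z)"
  by (metis assoc comm)

lemma npow_in: "x \<in> A \<Longrightarrow> npow op e x n \<in> A"
  by (induction n) (auto simp: e_in cl)

lemma npow_add: "x \<in> A \<Longrightarrow> npow op e x (m + n) = op (npow op e x m) (npow op e x n)"
  by (induction m) (auto simp: neut npow_in assoc)

lemma npow_mult: "x \<in> A \<Longrightarrow> npow op e x (m * n) = npow op e (npow op e x m) n"
proof (induction n)
  case 0 then show ?case by simp
next
  case (Suc n)
  have "m * Suc n = m + m * n" by simp
  then show ?case using Suc by (simp only: npow_add npow.simps) 
qed

lemma npow_distrib: "x \<in> A \<Longrightarrow> y \<in> A \<Longrightarrow> npow op e (op x y) n = op (npow op e x n) (npow op e y n)"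
proof (induction n)
  case 0 then show ?case by (simp add: neut e_in)
next
  case (Suc n)
  then show ?case
    by (simp add: assoc cl npow_in lcomm)
qed

lemma npow_e: "npow op e e n = e"
  by (induction n) (auto simp: neut e_in)

lemma npow_mono: "x \<in> A \<Longrightarrow> y \<in> A \<Longrightarrow> x \<le> y \<Longrightarrow> npow op e x n \<le> npow op e y n"
  by (induction n) (auto intro!: mono12 npow_in)

lemma npow_mono_n: "x \<in> A \<Longrightarrow> e \<le> x \<Longrightarrow> m \<le> n \<Longrightarrow> npow op e x m \<le> npow op e x n"
proof -
  assume x: "x \<in> A" "e \<le> x" "m \<le> n"
  then obtain k where k: "n = m + k" using le_Suc_ex by blast
  have "e \<le> npow op e x k" using npow_mono[OF e_in x(1) x(2), of k] by (simp add: npow_e)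
  hence "op (npow op e x m) e \<le> op (npow op e x m) (npow op e x k)"
    by (intro mono2) (auto simp: npow_in x e_in)
  then show ?thesis using k npow_add[OF x(1), of m k] neut2[OF npow_in[OF x(1)], of m] by simp
qed

lemma npow_anti_n: "x \<in> A \<Longrightarrow> x \<le> e \<Longrightarrow> m \<le> n \<Longrightarrow> npow op e x n \<le> npow op e x m"
proof -
  assume x: "x \<in> A" "x \<le> e" "m \<le> n"
  then obtain k where k: "n = m + k" using le_Suc_ex by blast
  have "npow op e x k \<le> e" using npow_mono[OF x(1) e_in x(2), of k] by (simp add: npow_e)
  hence "op (npow op e x m) (npow op e x k) \<le> op (npow op e x m) e"
    by (intro mono2) (auto simp: npow_in x e_in)
  then show ?thesis using k npow_add[OF x(1), of m k] neut2[OF npow_in[OF x(1)], of m] by simp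
qed

lemma npow_inv: "x \<in> A \<Longrightarrow> y \<in> A \<Longrightarrow> op x y = e \<Longrightarrow> op (npow op e x n) (npow op e y n) = e"
  using npow_distrib[of x y n] npow_e by simp

end


locale ogrp = cmon +
  fixes w v lo hi :: real
  assumes inv_ex: "x \<in> A \<Longrightarrow> \<exists>y\<in>A. op x y = e"
    and w_in: "w \<in> A" and v_in: "v \<in> A" and wv: "op w v = e" and e_less_w: "e < w"
    and arch_w: "x \<in> A \<Longrightarrow> \<exists>n. x \<le> npow op e w n"
    and arch_v: "x \<in> A \<Longrightarrow> \<exists>n. npow op e v n \<le> x"
    and arch_gen: "x \<in> A \<Longrightarrow> z \<in> A \<Longrightarrow> e < z \<Longrightarrow> \<exists>n. x \<le> npow op e z n"
    and root: "x \<in> A \<Longrightarrow> e < x \<Longrightarrow> \<exists>z\<in>A. op z z = x"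
    and A_int: "A = {lo<..<hi}"
begin

abbreviation pw where "pw \<equiv> npow op e"

lemma cancel: "x \<in> A \<Longrightarrow> y \<in> A \<Longrightarrow> z \<in> A \<Longrightarrow> op x z = op y z \<Longrightarrow> x = y"
proof -
  assume a: "x \<in> A" "y \<in> A" "z \<in> A" "op x z = op y z"
  obtain z' where z': "z' \<in> A" "op z z' = e" using inv_ex a(3) by blast
  have "x = op (op x z) z'" using assoc[OF a(1) a(3) z'(1)] z'(2) neut2[OF a(1)] by simp
  also have "\<dots> = op (op y z) z'" using a by simp
  also have "\<dots> = y" using assoc[OF a(2) a(3) z'(1)] z'(2) neut2[OF a(2)] by simp
  finally show ?thesis .
qed

lemma strict: "x \<in> A \<Longrightarrow> y \<in> A \<Longrightarrow> z \<in> A \<Longrightarrow> x < y \<Longrightarrow> op x z < op y z"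
  using mono cancel by (metis less_le)

lemma strict2: "x \<in> A \<Longrightarrow> y \<in> A \<Longrightarrow> z \<in> A \<Longrightarrow> x < y \<Longrightarrow> op z x < op z y"
  using strict comm by metis

definition P where "P p q = op (pw w p) (pw v q)"

lemma P_in: "P p q \<in> A"
  by (simp add: P_def cl npow_in w_in v_in)

lemma P_shift: "P (p + k) (q + k) = P p q"
proof -
  have "P (p + k) (q + k) = op (op (pw w p) (pw w k)) (op (pw v q) (pw v k))"
    by (simp add: P_def npow_add w_in v_in)
  also have "\<dots> = op (op (pw w p) (pw v q)) (op (pw w k) (pw v k))"
    by (metis assoc lcomm npow_in w_in v_in cl)
  also have "\<dots> = P p q" by (simp add: npow_inv w_in v_in wv neut2 P_in[unfolded P_def] P_def)
  finally show ?thesis .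
qed

lemma P_eq: "p + q' = p' + q \<Longrightarrow> P p q = P p' q'"
proof -
  assume h: "p + q' = p' + q"
  have "P p q = P (p + q') (q + q')" using P_shift by simp
  also have "\<dots> = P (p' + q) (q' + q)" using h by (simp add: add.commute)
  also have "\<dots> = P p' q'" using P_shift by simp
  finally show ?thesis .
qed

lemma P_mult: "op (P p q) (P p' q') = P (p + p') (q + q')"
proof -
  have "op (P p q) (P p' q') = op (op (pw w p) (pw w p')) (op (pw v q) (pw v q'))"
    unfolding P_def by (metis assoc lcomm npow_in w_in v_in cl)
  then show ?thesis by (simp add: P_def npow_add w_in v_in)
qed

definition ipw :: "int \<Rightarrow> real" where "ipw m = P (nat m) (nat (- m))"

lemma ipw_P: "ipw (int p - int q) = P p q"
  unfolding ipw_def by (rule P_eq) linarith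

lemma ipw_in: "ipw m \<in> A" by (simp add: ipw_def P_in)

lemma ipw_add: "ipw (i + j) = op (ipw i) (ipw j)"
proof -
  obtain p q p' q' where i: "i = int p - int q" and j: "j = int p' - int q'"
    by (metis diff_0_right of_nat_0 int_cases diff_0 of_nat_0 minus_diff_eq)
  have "i + j = int (p + p') - int (q + q')" using i j by simp
  then show ?thesis using i j by (simp only: ipw_P P_mult)
qed

lemma ipw_0: "ipw 0 = e" by (simp add: ipw_def P_def neut e_in)
lemma ipw_nat: "ipw (int n) = pw w n" by (simp add: ipw_def P_def neut2 npow_in w_in)
lemma ipw_1: "ipw 1 = w" using ipw_nat[of 1] by (simp add: neut2 w_in)

lemma ipw_mult: "ipw (m * int n) = pw (ipw m) n"
proof (induction n)
  case 0 then show ?case by (simp add: ipw_0)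
next
  case (Suc n)
  have "m * int (Suc n) = m + m * int n" by (simp add: algebra_simps)
  then show ?case using Suc by (simp add: ipw_add)
qed

lemma pw_w_gt: "0 < n \<Longrightarrow> e < pw w n"
proof -
  assume n: "0 < n"
  have "w \<le> pw w n" using npow_mono_n[OF w_in _ , of 1 n] e_less_w n
    by (simp add: neut2 w_in)
  then show ?thesis using e_less_w by simp
qed

lemma ipw_strict: "i < j \<Longrightarrow> ipw i < ipw j"
proof -
  assume ij: "i < j"
  have "ipw j = op (ipw i) (ipw (j - i))" using ipw_add[of i "j - i"] by simp
  moreover have "ipw (j - i) = pw w (nat (j - i))" using ipw_nat[of "nat (j - i)"] ij by simp
  moreover have "e < pw w (nat (j - i))" using pw_w_gt ij by simp
  ultimately show ?thesis using strict2[OF e_in npow_in[OF w_in] ipw_in, of "nat (j - i)" i]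
    by (simp add: neut2 ipw_in)
qed

lemma ipw_le_iff: "ipw i \<le> ipw j \<longleftrightarrow> i \<le> j"
proof
  assume "ipw i \<le> ipw j" then show "i \<le> j" using ipw_strict[of j i] by (cases "j < i") auto
next
  assume "i \<le> j" then show "ipw i \<le> ipw j" using ipw_strict[of i j] by (cases "i = j") auto
qed

lemma floor_ex: "y \<in> A \<Longrightarrow> \<exists>m. ipw m \<le> y \<and> y < ipw (m + 1)"
proof -
  assume y: "y \<in> A"
  obtain n where n: "pw v n \<le> y" using arch_v y by blast
  obtain N where N: "y \<le> pw w N" using arch_w y by blast
  have vn: "ipw (- int n) = pw v n" using ipw_P[of 0 n] by (simp add: P_def neut v_in npow_in)
  define S where "S = {m. - int n \<le> m \<and> m \<le> int N \<and> ipw m \<le> y}"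
  have fin: "finite S" unfolding S_def by (rule finite_subset[of _ "{- int n..int N}"]) auto
  have ne: "- int n \<in> S" using n vn N unfolding S_def
    by (simp add: ipw_le_iff[symmetric] ipw_nat)
  define m where "m = Max S"
  have mS: "m \<in> S" using fin ne Max_in m_def by blast
  have "y < ipw (m + 1)"
  proof (rule ccontr)
    assume "\<not> y < ipw (m + 1)"
    hence le: "ipw (m + 1) \<le> y" by simp
    hence "ipw (m + 1) \<le> ipw (int N)" using N ipw_nat by simp
    hence "m + 1 \<le> int N" using ipw_le_iff by blast
    hence "m + 1 \<in> S" using mS le unfolding S_def by auto
    hence "m + 1 \<le> m" using fin m_def Max_ge by blast
    then show False by simp
  qed
  then show ?thesis using mS unfolding S_def by auto
qed

end


context ogrp
begin

definition hS where "hS x = {r. \<exists>m n. 0 < n \<and> r = real_of_int m / real n \<and> ipw m \<le> pw x n}"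
definition hh where "hh x = Sup (hS x)"

lemma key_ineq:
  assumes x: "x \<in> A" and n: "0 < n" "0 < n'" and l: "ipw m' \<le> pw x n'" and u: "pw x n \<le> ipw m"
  shows "real_of_int m' / real n' \<le> real_of_int m / real n"
proof -
  have "ipw (m' * int n) = pw (ipw m') n" by (rule ipw_mult)
  also have "\<dots> \<le> pw (pw x n') n" by (rule npow_mono[OF ipw_in npow_in[OF x] l])
  also have "\<dots> = pw x (n' * n)" by (simp add: npow_mult x)
  also have "\<dots> = pw (pw x n) n'" by (simp add: npow_mult[symmetric] x mult.commute)
  also have "\<dots> \<le> pw (ipw m) n'" by (rule npow_mono[OF npow_in[OF x] ipw_in u])
  also have "\<dots> = ipw (m * int n')" by (rule ipw_mult[symmetric])
  finally have "m' * int n \<le> m * int n'" using ipw_le_iff by blast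
  hence "real_of_int m' * real n \<le> real_of_int m * real n'"
    by (metis of_int_le_iff of_int_mult of_int_of_nat_eq)
  then show ?thesis using n by (simp add: divide_simps)
qed

lemma hS_ne: "x \<in> A \<Longrightarrow> hS x \<noteq> {}"
proof -
  assume x: "x \<in> A"
  obtain m where "ipw m \<le> x" using floor_ex x by blast
  hence "real_of_int m / real (1::nat) \<in> hS x" unfolding hS_def using x
    by (auto simp: neut2 e_in intro!: exI[of _ m] exI[of _ "1::nat"])
  then show ?thesis by blast
qed

lemma hS_bdd: "x \<in> A \<Longrightarrow> bdd_above (hS x)"
proof -
  assume x: "x \<in> A"
  obtain m where m: "x < ipw (m + 1)" using floor_ex x by blast
  have "r \<le> real_of_int (m + 1) / real (1::nat)" if "r \<in> hS x" for r
    using that key_ineq[OF x _ _ _ , of 1 _ _ "m + 1"] m unfolding hS_def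
    by (auto simp: neut2 x)
  then show ?thesis unfolding bdd_above_def by auto
qed

lemma hh_lower: "x \<in> A \<Longrightarrow> 0 < n \<Longrightarrow> ipw m \<le> pw x n \<Longrightarrow> real_of_int m / real n \<le> hh x"
  unfolding hh_def by (rule cSup_upper[OF _ hS_bdd]) (auto simp: hS_def)

lemma hh_upper: "x \<in> A \<Longrightarrow> 0 < n \<Longrightarrow> pw x n \<le> ipw m \<Longrightarrow> hh x \<le> real_of_int m / real n"
  unfolding hh_def
  by (rule cSup_least[OF hS_ne]) (auto simp: hS_def intro: key_ineq)

lemma bracket: "x \<in> A \<Longrightarrow> 0 < n \<Longrightarrow> \<exists>m. ipw m \<le> pw x n \<and> pw x n \<le> ipw (m + 1) \<and>
   real_of_int m / real n \<le> hh x \<and> hh x \<le> real_of_int (m + 1) / real n"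
proof -
  assume x: "x \<in> A" and n: "0 < n"
  obtain m where m: "ipw m \<le> pw x n" "pw x n < ipw (m + 1)" using floor_ex npow_in[OF x] by blast
  then show ?thesis using hh_lower[OF x n m(1)] hh_upper[OF x n, of "m + 1"] by (auto intro!: exI[of _ m])
qed

lemma small_zero: "(\<And>n. 0 < n \<Longrightarrow> \<bar>t\<bar> \<le> 2 / real n) \<Longrightarrow> t = (0::real)"
proof (rule ccontr)
  assume h: "\<And>n. 0 < n \<Longrightarrow> \<bar>t\<bar> \<le> 2 / real n" and t: "t \<noteq> 0"
  obtain n :: nat where n: "2 / \<bar>t\<bar> < real n" using reals_Archimedean2 by blast
  have "0 < 2 / \<bar>t\<bar>" using t by simp
  hence "0 < real n" using n by linarith
  hence "0 < n" by simp
  hence "\<bar>t\<bar> \<le> 2 / real n" using h by blast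
  hence "\<bar>t\<bar> * real n \<le> 2" using \<open>0 < n\<close> by (simp add: field_simps)
  moreover have "2 < \<bar>t\<bar> * real n" using n t by (simp add: field_simps)
  ultimately show False by simp
qed

lemma hh_add: "x \<in> A \<Longrightarrow> y \<in> A \<Longrightarrow> hh (op x y) = hh x + hh y"
proof -
  assume x: "x \<in> A" and y: "y \<in> A"
  have "\<bar>hh (op x y) - hh x - hh y\<bar> \<le> 2 / real n" if n: "0 < n" for n
  proof -
    obtain m1 where m1: "ipw m1 \<le> pw x n" "pw x n \<le> ipw (m1 + 1)"
      "real_of_int m1 / real n \<le> hh x" "hh x \<le> real_of_int (m1 + 1) / real n"
      using bracket[OF x n] by blast
    obtain m2 where m2: "ipw m2 \<le> pw y n" "pw y n \<le> ipw (m2 + 1)"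
      "real_of_int m2 / real n \<le> hh y" "hh y \<le> real_of_int (m2 + 1) / real n"
      using bracket[OF y n] by blast
    have pxy: "pw (op x y) n = op (pw x n) (pw y n)" by (rule npow_distrib[OF x y])
    have "ipw (m1 + m2) \<le> pw (op x y) n" unfolding pxy ipw_add
      by (rule mono12) (auto simp: ipw_in npow_in x y m1 m2)
    hence l: "real_of_int (m1 + m2) / real n \<le> hh (op x y)" using hh_lower[OF cl[OF x y] n] by blast
    have "pw (op x y) n \<le> op (ipw (m1 + 1)) (ipw (m2 + 1))" unfolding pxy
      by (rule mono12) (auto simp: ipw_in npow_in x y m1 m2)
    hence "pw (op x y) n \<le> ipw ((m1 + 1) + (m2 + 1))" by (simp only: ipw_add[of "m1 + 1" "m2 + 1"])
    hence u: "hh (op x y) \<le> real_of_int ((m1 + 1) + (m2 + 1)) / real n" using hh_upper[OF cl[OF x y] n] by blast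
    have e1: "real_of_int (m1 + m2) / real n = real_of_int m1 / real n + real_of_int m2 / real n"
      by (simp add: add_divide_distrib)
    have e2: "real_of_int ((m1 + 1) + (m2 + 1)) / real n = real_of_int m1 / real n + real_of_int m2 / real n + 2 / real n"
      by (simp add: add_divide_distrib)
    have e3: "real_of_int (m1 + 1) / real n = real_of_int m1 / real n + 1 / real n"
      by (simp add: add_divide_distrib)
    have e4: "real_of_int (m2 + 1) / real n = real_of_int m2 / real n + 1 / real n"
      by (simp add: add_divide_distrib)
    have e5: "2 / real n = 1 / real n + 1 / real n" by simp
    have gen: "\<And>(L::real) X Y a b q. a \<le> X \<Longrightarrow> X \<le> a + q \<Longrightarrow> b \<le> Y \<Longrightarrow> Y \<le> b + q \<Longrightarrow>
       a + b \<le> L \<Longrightarrow> L \<le> a + b + (q + q) \<Longrightarrow> \<bar>L - X - Y\<bar> \<le> q + q"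
      by (simp add: abs_le_iff)
    show ?thesis unfolding e5
      by (rule gen[OF m1(3) _ m2(3) _ l[unfolded e1] u[unfolded e2 e5]])
         (use m1(4) m2(4) e3 e4 in simp_all)
  qed
  then show ?thesis using small_zero[of "hh (op x y) - hh x - hh y"] by simp
qed

lemma hh_e: "hh e = 0"
  using hh_add[OF e_in e_in] by (simp add: neut e_in)

lemma hh_w: "hh w = 1"
proof -
  have "real_of_int 1 / real (1::nat) \<le> hh w" by (rule hh_lower) (auto simp: w_in ipw_1 neut2)
  moreover have "hh w \<le> real_of_int 1 / real (1::nat)" by (rule hh_upper) (auto simp: w_in ipw_1 neut2)
  ultimately show ?thesis by simp
qed

lemma hh_v: "hh v = -1"
  using hh_add[OF w_in v_in] wv hh_e hh_w by simp

lemma hh_pw: "x \<in> A \<Longrightarrow> hh (pw x n) = real n * hh x"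
  by (induction n) (auto simp: hh_e hh_add npow_in algebra_simps)

lemma hh_ipw: "hh (ipw m) = real_of_int m"
proof (cases "0 \<le> m")
  case True
  then have "ipw m = pw w (nat m)" using ipw_nat[of "nat m"] by simp
  then show ?thesis using True by (simp add: hh_pw w_in hh_w)
next
  case False
  then have "ipw m = ipw (int 0 - int (nat (- m)))" by simp
  also have "\<dots> = pw v (nat (- m))" unfolding ipw_P by (simp add: P_def neut v_in npow_in)
  finally show ?thesis using False by (simp add: hh_pw v_in hh_v)
qed

lemma hh_strict: "x \<in> A \<Longrightarrow> y \<in> A \<Longrightarrow> x < y \<Longrightarrow> hh x < hh y"
proof -
  assume x: "x \<in> A" and y: "y \<in> A" and xy: "x < y"
  obtain x' where x': "x' \<in> A" "op x x' = e" using inv_ex x by blast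
  define z where "z = op y x'"
  have z: "z \<in> A" using z_def cl y x' by simp
  have yz: "op x z = y" unfolding z_def using lcomm[OF x y x'(1)] x' neut2 y by simp
  have ez: "e < z"
  proof (rule ccontr)
    assume "\<not> e < z"
    hence "op x z \<le> op x e" using mono2[OF z e_in x] by simp
    then show False using yz neut2[OF x] xy by simp
  qed
  obtain n where n: "w \<le> pw z n" using arch_gen[OF w_in z ez] by blast
  have n0: "0 < n" using n e_less_w by (cases n) auto
  have "real_of_int 1 / real n \<le> hh z" by (rule hh_lower[OF z n0]) (simp add: ipw_1 n)
  hence "0 < hh z" using n0 by (smt (verit) divide_pos_pos of_int_1 of_nat_0_less_iff)
  then show ?thesis using hh_add[OF x z] yz by simp
qed

lemma roots: "\<exists>r\<in>A. e < r \<and> pw r (2 ^ k) = w"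
proof (induction k)
  case 0 then show ?case using w_in e_less_w by (auto simp: neut2)
next
  case (Suc k)
  then obtain r where r: "r \<in> A" "e < r" "pw r (2 ^ k) = w" by blast
  obtain s where s: "s \<in> A" "op s s = r" using root r by blast
  have es: "e < s"
  proof (rule ccontr)
    assume "\<not> e < s"
    hence "op s s \<le> op e e" using mono12[OF s(1) s(1) e_in e_in] by simp
    then show False using s r neut e_in by simp
  qed
  have "pw s (2 ^ Suc k) = pw (pw s 2) (2 ^ k)" by (simp add: npow_mult[symmetric] s(1))
  also have "pw s 2 = r" using s by (simp add: numeral_2_eq_2 neut2)
  finally show ?case using s es r by auto
qed

lemma hh_cont: "continuous_on A hh"
  unfolding continuous_on_iff
proof (intro ballI allI impI)
  fix x and eps :: real
  assume x: "x \<in> A" and eps: "0 < eps"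
  obtain k :: nat where k: "1 / eps < 2 ^ k" using real_arch_pow[of 2 "1/eps"] by auto
  have k2: "1 / 2 ^ k < eps" using k eps by (simp add: field_simps)
  obtain r where r: "r \<in> A" "e < r" "pw r (2 ^ k) = w" using roots by blast
  have hr: "hh r = 1 / 2 ^ k" using hh_pw[OF r(1), of "2 ^ k"] r(3) hh_w by (simp add: field_simps)
  obtain r' where r': "r' \<in> A" "op r r' = e" using inv_ex r by blast
  have hr': "hh r' = - (1 / 2 ^ k)" using hh_add[OF r(1) r'(1)] r' hr hh_e by simp
  have r'e: "r' < e"
  proof (rule ccontr)
    assume "\<not> r' < e"
    hence "op r e \<le> op r r'" using mono2[OF e_in r'(1) r(1)] by simp
    then show False using r r' neut2 by simp
  qed
  define xp where "xp = op x r"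
  define xm where "xm = op x r'"
  have xp: "xp \<in> A" "x < xp" "hh xp = hh x + 1 / 2 ^ k"
    using xp_def cl[OF x r(1)] hh_add[OF x r(1)] hr strict2[OF e_in r(1) x r(2)] neut2[OF x] by simp_all
  have xm: "xm \<in> A" "xm < x" "hh xm = hh x - 1 / 2 ^ k"
    using xm_def cl[OF x r'(1)] hh_add[OF x r'(1)] hr' strict2[OF r'(1) e_in x r'e] neut2[OF x] by simp_all
  show "\<exists>d>0. \<forall>y\<in>A. dist y x < d \<longrightarrow> dist (hh y) (hh x) < eps"
  proof (intro exI[of _ "min (xp - x) (x - xm)"] conjI ballI impI)
    show "0 < min (xp - x) (x - xm)" using xp xm by simp
    fix y assume y: "y \<in> A" "dist y x < min (xp - x) (x - xm)"
    hence "xm < y" "y < xp" by (auto simp: dist_real_def)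
    hence "hh xm < hh y" "hh y < hh xp" using hh_strict[OF xm(1) y(1)] hh_strict[OF y(1) xp(1)] by blast+
    then show "dist (hh y) (hh x) < eps" using xp(3) xm(3) k2 unfolding dist_real_def by linarith
  qed
qed

lemma interval_sub: "x \<in> A \<Longrightarrow> y \<in> A \<Longrightarrow> {x..y} \<subseteq> A"
  using A_int by auto

lemma hh_surj: "\<exists>x\<in>A. hh x = r"
proof -
  define N where "N = nat \<lceil>\<bar>r\<bar>\<rceil>"
  have "hh (ipw (- int N)) \<le> r" "r \<le> hh (ipw (int N))" unfolding hh_ipw N_def by linarith+
  moreover have "ipw (- int N) \<le> ipw (int N)" using ipw_le_iff by simp
  moreover have "continuous_on {ipw (- int N)..ipw (int N)} hh"
    using continuous_on_subset[OF hh_cont interval_sub[OF ipw_in ipw_in]] by blast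
  ultimately obtain x where "ipw (- int N) \<le> x" "x \<le> ipw (int N)" "hh x = r"
    using IVT'[of hh "ipw (- int N)" r "ipw (int N)"] by blast
  then show ?thesis using interval_sub[OF ipw_in ipw_in, of "- int N" "int N"] by auto
qed

theorem holder: "\<exists>h :: real \<Rightarrow> real. strict_mono_on A h \<and> (\<forall>x\<in>A. \<forall>y\<in>A. h (op x y) = h x + h y) \<and>
   continuous_on A h \<and> (\<forall>r. \<exists>x\<in>A. h x = r)"
proof -
  have "strict_mono_on A hh" by (rule strict_mono_onI) (rule hh_strict)
  then show ?thesis using hh_cont hh_surj hh_add by blast
qed

end


definition eoplus :: "ereal \<Rightarrow> ereal \<Rightarrow> ereal" where
  "eoplus x y = (if x = -\<infinity> \<or> y = -\<infinity> then -\<infinity> else x + y)"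

lemma eoplus_comm: "eoplus x y = eoplus y x"
  by (simp add: eoplus_def add.commute)

lemma eoplus_assoc: "eoplus (eoplus x y) z = eoplus x (eoplus y z)"
  by (cases x; cases y; cases z) (auto simp: eoplus_def)

lemma eoplus_mono: "x \<le> x' \<Longrightarrow> eoplus x y \<le> eoplus x' y"
  by (cases x; cases x'; cases y) (auto simp: eoplus_def)

lemma eoplus_0: "eoplus 0 z = z"
  by (cases z) (auto simp: eoplus_def)

lemma make_repr:
  fixes op :: "real \<Rightarrow> real \<Rightarrow> real" and k :: "real \<Rightarrow> real" and a d :: real
  assumes ad: "a < d" and sm: "strict_mono_on {a<..<d} k" and surj: "\<forall>r. \<exists>x\<in>{a<..<d}. k x = r"
    and hom: "\<forall>x\<in>{a<..<d}. \<forall>y\<in>{a<..<d}. op x y \<in> {a<..<d} \<and> k (op x y) = k x + k y"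
  shows "\<exists>V f. representable V f \<and> linear_transform_on op a d V"
proof -
  define \<phi> where "\<phi> p = a + (d - a) * p" for p
  define \<psi> where "\<psi> x = (x - a) / (d - a)" for x
  have \<phi>\<psi>: "\<phi> (\<psi> x) = x" for x using ad by (simp add: \<phi>_def \<psi>_def)
  have \<psi>in: "x \<in> {a<..<d} \<Longrightarrow> \<psi> x \<in> {0<..<1}" for x using ad by (auto simp: \<psi>_def field_simps)
  have \<phi>in: "p \<in> {0<..<1} \<Longrightarrow> \<phi> p \<in> {a<..<d}" for p using ad
    by (auto simp: \<phi>_def) (smt (verit) mult_less_cancel_left2 mult_pos_pos)+
  have \<phi>mono: "p < q \<Longrightarrow> \<phi> p < \<phi> q" for p q using ad by (simp add: \<phi>_def)
  define H where "H p = (if p \<le> 0 then -\<infinity> else if 1 \<le> p then \<infinity> else ereal (k (\<phi> p)))" for p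
  have ksm: "x \<in> {a<..<d} \<Longrightarrow> y \<in> {a<..<d} \<Longrightarrow> x < y \<Longrightarrow> k x < k y" for x y
    using sm by (simp add: strict_mono_on_def)
  have Hsm: "strict_mono_on {0..1} H"
  proof (rule strict_mono_onI)
    fix p q :: real assume pq: "p \<in> {0..1}" "q \<in> {0..1}" "p < q"
    show "H p < H q"
    proof (cases "p = 0")
      case True then show ?thesis using pq by (auto simp: H_def)
    next
      case False
      show ?thesis
      proof (cases "q = 1")
        case True then show ?thesis using pq False by (auto simp: H_def)
      next
        case False2: False
        then have "p \<in> {0<..<1}" "q \<in> {0<..<1}" using pq False by auto
        then have "\<phi> p \<in> {a<..<d}" "\<phi> q \<in> {a<..<d}" using \<phi>in by blast+
        then show ?thesis using pq False False2 ksm[of "\<phi> p" "\<phi> q"] \<phi>mono[of p q] by (auto simp: H_def)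
      qed
    qed
  qed
  have Hmono: "p \<in> {0..1} \<Longrightarrow> q \<in> {0..1} \<Longrightarrow> p \<le> q \<Longrightarrow> H p \<le> H q" for p q
    using Hsm by (metis order_le_less strict_mono_onD)
  have Hinj: "inj_on H {0..1}" using Hsm by (rule strict_mono_on_imp_inj_on)
  have Hsurj: "H ` {0..1} = UNIV"
  proof -
    have "z \<in> H ` {0..1}" for z
    proof (cases z)
      case (real r)
      obtain x where x: "x \<in> {a<..<d}" "k x = r" using surj by blast
      have "\<psi> x \<in> {0<..<1}" using \<psi>in x by blast
      hence "H (\<psi> x) = z" using x real \<phi>\<psi> by (auto simp: H_def)
      then show ?thesis using \<open>\<psi> x \<in> {0<..<1}\<close> by force
    next
      case PInf
      have "H 1 = \<infinity>" by (simp add: H_def)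
      then show ?thesis using PInf by (intro image_eqI[of _ _ 1]) auto
    next
      case MInf
      have "H 0 = -\<infinity>" by (simp add: H_def)
      then show ?thesis using MInf by (intro image_eqI[of _ _ 0]) auto
    qed
    then show ?thesis by blast
  qed
  define G where "G = the_inv_into {0..1} H"
  have G01: "G z \<in> {0..1}" for z unfolding G_def using the_inv_into_into[OF Hinj, of z "{0..1}"] Hsurj by auto
  have HG: "H (G z) = z" for z unfolding G_def using f_the_inv_into_f[OF Hinj, of z] Hsurj by auto
  have GH: "p \<in> {0..1} \<Longrightarrow> G (H p) = p" for p unfolding G_def using the_inv_into_f_f[OF Hinj] by blast
  have Gmono: "z \<le> z' \<Longrightarrow> G z \<le> G z'" for z z'
  proof (rule ccontr)
    assume zz: "z \<le> z'" "\<not> G z \<le> G z'"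
    hence "H (G z') < H (G z)" using Hsm G01 by (simp add: strict_mono_onD)
    then show False using zz HG by (simp add: not_le)
  qed
  have Hm: "p \<in> {0..1} \<Longrightarrow> H p = -\<infinity> \<longleftrightarrow> p = 0" for p by (simp add: H_def)
  have Hp: "p \<in> {0..1} \<Longrightarrow> H p = \<infinity> \<longleftrightarrow> p = 1" for p by (simp add: H_def)
  define V where "V p q = G (eoplus (H p) (H q))" for p q
  define f where "f = G 0"
  have Hf: "H f = 0" by (simp add: f_def HG)
  have f01: "f \<in> {0..1}" unfolding f_def by (rule G01)
  have un: "uninorm V f"
    unfolding uninorm_def
  proof (intro conjI ballI impI)
    show "f \<in> {0..1}" by (rule f01)
    show "V x y \<in> {0..1}" for x y unfolding V_def by (rule G01)
    show "V x y = V y x" for x y by (simp add: V_def eoplus_comm)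
    show "V (V x y) z = V x (V y z)" for x y z by (simp add: V_def HG eoplus_assoc)
    show "V x y \<le> V x' y" if "x \<in> {0..1}" "x' \<in> {0..1}" "x \<le> x'" for x x' y
      unfolding V_def by (intro Gmono eoplus_mono Hmono that)
    show "V f x = x" if "x \<in> {0..1}" for x using that by (simp add: V_def Hf eoplus_0 GH)
  qed
  have f0: "0 < f" and f1: "f < 1"
    using f01 Hf Hm[OF f01] Hp[OF f01] by (auto simp: less_le)
  have Hcont: "continuous_on {0..1} H"
    by (rule continuous_onI_mono) (auto simp: Hsurj intro: Hmono)
  have rep: "representable V f"
    unfolding representable_def
  proof (intro conjI exI[of _ H])
    show "uninorm V f" by (rule un)
    show "0 < f" "f < 1" by (rule f0, rule f1)
    show "continuous_on {0..1} H" by (rule Hcont)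
    show "strict_mono_on {0..1} H" by (rule Hsm)
    show "H 0 = -\<infinity>" "H 1 = \<infinity>" by (simp_all add: H_def)
    show "H f = 0" by (rule Hf)
    show "\<forall>x\<in>{0..1}. \<forall>y\<in>{0..1}. (x, y) \<notin> {(0, 1), (1, 0)} \<longrightarrow> V x y = the_inv_into {0..1} H (H x + H y)"
    proof (intro ballI impI)
      fix x y :: real assume xy: "x \<in> {0..1}" "y \<in> {0..1}" "(x, y) \<notin> {(0, 1), (1, 0)}"
      have "eoplus (H x) (H y) = H x + H y"
      proof (cases "H x = -\<infinity> \<or> H y = -\<infinity>")
        case True
        then show ?thesis
        proof
          assume hx: "H x = -\<infinity>"
          hence "x = 0" using Hm xy by blast
          hence "H y \<noteq> \<infinity>" using xy Hp by auto
          then show ?thesis using hx by (cases "H y") (auto simp: eoplus_def)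
        next
          assume hy: "H y = -\<infinity>"
          hence "y = 0" using Hm xy by blast
          hence "H x \<noteq> \<infinity>" using xy Hp by auto
          then show ?thesis using hy by (cases "H x") (auto simp: eoplus_def)
        qed
      qed (auto simp: eoplus_def)
      then show "V x y = the_inv_into {0..1} H (H x + H y)" by (simp add: V_def G_def)
    qed
  qed
  have lin: "linear_transform_on op a d V"
    unfolding linear_transform_on_def
  proof (intro ballI)
    fix x y assume x: "x \<in> {a<..<d}" and y: "y \<in> {a<..<d}"
    have Hx: "H (\<psi> x) = ereal (k x)" using \<psi>in[OF x] \<phi>\<psi> by (auto simp: H_def)
    have Hy: "H (\<psi> y) = ereal (k y)" using \<psi>in[OF y] \<phi>\<psi> by (auto simp: H_def)
    have oxy: "op x y \<in> {a<..<d}" "k (op x y) = k x + k y" using hom x y by auto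
    have Hxy: "H (\<psi> (op x y)) = ereal (k x + k y)" using \<psi>in[OF oxy(1)] \<phi>\<psi> oxy(2) by (auto simp: H_def)
    have "V (\<psi> x) (\<psi> y) = G (ereal (k x + k y))" by (simp add: V_def Hx Hy eoplus_def)
    also have "\<dots> = \<psi> (op x y)" using Hxy GH \<psi>in[OF oxy(1)] by (metis greaterThanLessThan_iff atLeastAtMost_iff less_imp_le)
    finally have "V (\<psi> x) (\<psi> y) = \<psi> (op x y)" .
    then show "op x y = a + (d - a) * V ((x - a) / (d - a)) ((y - a) / (d - a))"
      using \<phi>\<psi>[of "op x y"] by (simp add: \<psi>_def \<phi>_def)
  qed
  show ?thesis using rep lin by blast
qed


lemma lim2:
  fixes U :: "real \<Rightarrow> real \<Rightarrow> real"
  assumes c: "continuous_on (K \<times> K) (\<lambda>(x, y). U x y)"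
    and s: "s \<longlonglongrightarrow> L" and t: "t \<longlonglongrightarrow> M" and sK: "\<And>n. s n \<in> K" and tK: "\<And>n. t n \<in> K"
    and L: "L \<in> K" and M: "M \<in> K"
  shows "(\<lambda>n. U (s n) (t n)) \<longlonglongrightarrow> U L M"
proof -
  have "((\<lambda>n. (\<lambda>(x, y). U x y) (s n, t n)) \<longlongrightarrow> (\<lambda>(x, y). U x y) (L, M)) sequentially"
    by (rule continuous_on_tendsto_compose[OF c tendsto_Pair[OF s t]]) (use L M sK tK in auto)
  then show ?thesis by simp
qed

lemma mono_bij_cont:
  fixes f :: "real \<Rightarrow> real"
  assumes m: "\<And>x y. x \<in> {0..1} \<Longrightarrow> y \<in> {0..1} \<Longrightarrow> x \<le> y \<Longrightarrow> f x \<le> f y"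
    and into: "\<And>x. x \<in> {0..1} \<Longrightarrow> f x \<in> {0..1}"
    and onto: "\<And>y. y \<in> {0..1} \<Longrightarrow> \<exists>x\<in>{0..1}. f x = y"
  shows "continuous_on {0..1} f"
proof -
  define F where "F x = (if x \<in> {0..1} then f x else x)" for x
  have "range F = UNIV"
  proof -
    have "y \<in> range F" for y
    proof (cases "y \<in> {0..1}")
      case True
      then obtain x where "x \<in> {0..1}" "f x = y" using onto by blast
      then show ?thesis by (metis F_def rangeI)
    next
      case False
      then show ?thesis by (metis F_def rangeI)
    qed
    then show ?thesis by blast
  qed
  moreover have "F x \<le> F y" if "x \<le> y" for x y
    using that m[of x y] into[of x] into[of y] by (auto simp: F_def)
  ultimately have "continuous_on UNIV F"
    by (intro continuous_onI_mono) auto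
  hence "continuous_on {0..1} F" by (rule continuous_on_subset) simp
  then show ?thesis by (rule continuous_on_eq) (simp add: F_def)
qed

lemma contT:
  assumes cu: "continuous_underlying U e" and e: "0 < e" "e < 1"
  shows "continuous_on ({0..e} \<times> {0..e}) (\<lambda>(x, y). U x y)"
proof -
  have F: "continuous_on ({0..1} \<times> {0..1}) (\<lambda>(x, y). U (e * x) (e * y) / e)"
    using cu unfolding continuous_underlying_def underlying_tnorm_def by blast
  have g: "continuous_on ({0..e} \<times> {0..e}) (\<lambda>z. (fst z / e, snd z / e))"
    by (intro continuous_intros) (use e in auto)
  have img: "(\<lambda>z. (fst z / e, snd z / e)) ` ({0..e} \<times> {0..e}) \<subseteq> {0..1} \<times> {0..1}"
    using e by auto
  have "continuous_on ({0..e} \<times> {0..e}) (\<lambda>z. (\<lambda>(x, y). U (e * x) (e * y) / e) (fst z / e, snd z / e))"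
    by (rule continuous_on_compose2[OF F g img])
  hence "continuous_on ({0..e} \<times> {0..e}) (\<lambda>z. e * ((\<lambda>(x, y). U (e * x) (e * y) / e) (fst z / e, snd z / e)))"
    by (rule continuous_on_mult_left)
  then show ?thesis
    by (rule continuous_on_eq) (use e in auto)
qed

lemma contS:
  assumes cu: "continuous_underlying U e" and e: "0 < e" "e < 1"
  shows "continuous_on ({e..1} \<times> {e..1}) (\<lambda>(x, y). U x y)"
proof -
  have F: "continuous_on ({0..1} \<times> {0..1}) (\<lambda>(x, y). (U (e + (1 - e) * x) (e + (1 - e) * y) - e) / (1 - e))"
    using cu unfolding continuous_underlying_def underlying_tconorm_def by blast
  have g: "continuous_on ({e..1} \<times> {e..1}) (\<lambda>z. ((fst z - e) / (1 - e), (snd z - e) / (1 - e)))"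
    by (intro continuous_intros) (use e in auto)
  have img: "(\<lambda>z. ((fst z - e) / (1 - e), (snd z - e) / (1 - e))) ` ({e..1} \<times> {e..1}) \<subseteq> {0..1} \<times> {0..1}"
    using e by auto
  have "continuous_on ({e..1} \<times> {e..1}) (\<lambda>z. (\<lambda>(x, y). (U (e + (1 - e) * x) (e + (1 - e) * y) - e) / (1 - e)) ((fst z - e) / (1 - e), (snd z - e) / (1 - e)))"
    by (rule continuous_on_compose2[OF F g img])
  hence "continuous_on ({e..1} \<times> {e..1}) (\<lambda>z. e + (1 - e) * ((\<lambda>(x, y). (U (e + (1 - e) * x) (e + (1 - e) * y) - e) / (1 - e)) ((fst z - e) / (1 - e), (snd z - e) / (1 - e))))"
    by (intro continuous_intros)
  then show ?thesis
    by (rule continuous_on_eq) (use e in auto)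
qed


lemma uninorm_cmon: "uninorm U e \<Longrightarrow> cmon {0..1} U e"
  unfolding uninorm_def cmon_def by blast

locale sett =
  fixes U :: "real \<Rightarrow> real \<Rightarrow> real" and e w v :: real
  assumes un: "uninorm U e" and e0: "0 < e" and e1: "e < 1" and cu: "continuous_underlying U e"
    and w01: "w \<in> {0..1}" and v01: "v \<in> {0..1}" and wv: "U w v = e" and ew: "e < w"
begin

sublocale C: cmon "{0..1}" U e by (rule uninorm_cmon[OF un])

lemma cT: "continuous_on ({0..e} \<times> {0..e}) (\<lambda>(x, y). U x y)" by (rule contT[OF cu e0 e1])
lemma cS: "continuous_on ({e..1} \<times> {e..1}) (\<lambda>(x, y). U x y)" by (rule contS[OF cu e0 e1])

lemma e01: "e \<in> {0..1}" using e0 e1 by simp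

lemma ve: "v < e"
proof (rule ccontr)
  assume "\<not> v < e"
  hence "U w e \<le> U w v" using C.mono2[OF e01 v01 w01] by simp
  then show False using wv C.neut2[OF w01] ew by simp
qed

abbreviation W where "W n \<equiv> npow U e w n"
abbreviation Vn where "Vn n \<equiv> npow U e v n"

lemma W01: "W n \<in> {0..1}" by (rule C.npow_in[OF w01])
lemma V01: "Vn n \<in> {0..1}" by (rule C.npow_in[OF v01])
lemma WV: "U (W n) (Vn n) = e" by (rule C.npow_inv[OF w01 v01 wv])

lemma W_strict: "W n < W (Suc n)"
proof -
  have le: "W n \<le> W (Suc n)" using C.npow_mono_n[OF w01, of n "Suc n"] ew by simp
  have "W n \<noteq> W (Suc n)"
  proof
    assume eq: "W n = W (Suc n)"
    have "U (W (Suc n)) (Vn n) = U w (U (W n) (Vn n))" using C.assoc[OF w01 W01 V01] by simp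
    also have "\<dots> = w" using WV C.neut2[OF w01] by simp
    finally have A: "U (W (Suc n)) (Vn n) = w" .
    have B: "U (W n) (Vn n) = U (W (Suc n)) (Vn n)" by (rule arg_cong[OF eq])
    have "w = e" using A B WV[of n] by argo
    then show False using ew by simp
  qed
  then show ?thesis using le by simp
qed

lemma V_strict: "Vn (Suc n) < Vn n"
proof -
  have le: "Vn (Suc n) \<le> Vn n" using C.npow_anti_n[OF v01, of n "Suc n"] ve by simp
  have "Vn n \<noteq> Vn (Suc n)"
  proof
    assume eq: "Vn n = Vn (Suc n)"
    have "U (W n) (Vn (Suc n)) = U v (U (W n) (Vn n))"
      using C.lcomm[OF W01 v01 V01] by simp
    also have "\<dots> = v" using WV C.neut2[OF v01] by simp
    finally have A: "U (W n) (Vn (Suc n)) = v" .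
    have B: "U (W n) (Vn n) = U (W n) (Vn (Suc n))" by (rule arg_cong[OF eq])
    have "v = e" using A B WV[of n] by argo
    then show False using ve by simp
  qed
  then show ?thesis using le by simp
qed

lemma W_inc: "incseq W" using W_strict by (simp add: incseq_SucI less_imp_le)
lemma V_dec: "decseq Vn" using V_strict by (simp add: decseq_SucI less_imp_le)
lemma W_bdd: "bdd_above (range W)" using W01 by (auto intro!: bdd_aboveI[of _ 1])
lemma V_bdd: "bdd_below (range Vn)" using V01 by (auto intro!: bdd_belowI[of _ 0])

definition d where "d = (SUP n. W n)"
definition a where "a = (INF n. Vn n)"

lemma W_lim: "W \<longlonglongrightarrow> d" unfolding d_def by (rule LIMSEQ_incseq_SUP[OF W_bdd W_inc])
lemma V_lim: "Vn \<longlonglongrightarrow> a" unfolding a_def by (rule LIMSEQ_decseq_INF[OF V_bdd V_dec])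

lemma W_le_d: "W n \<le> d" unfolding d_def by (rule cSUP_upper[OF _ W_bdd]) simp
lemma a_le_V: "a \<le> Vn n" unfolding a_def by (rule cINF_lower[OF V_bdd]) simp
lemma W_less_d: "W n < d" using W_strict[of n] W_le_d[of "Suc n"] by simp
lemma a_less_V: "a < Vn n" using V_strict[of n] a_le_V[of "Suc n"] by simp

lemma We: "e \<le> W n" using C.npow_mono_n[OF w01, of 0 n] ew by simp
lemma Ve: "Vn n \<le> e" using C.npow_anti_n[OF v01, of 0 n] ve by simp

lemma d1: "d \<le> 1" unfolding d_def using W01 by (intro cSUP_least) auto
lemma a0: "0 \<le> a" unfolding a_def using V01 by (intro cINF_greatest) auto
lemma ed: "e < d" using W_less_d[of 0] by simp
lemma ae: "a < e" using a_less_V[of 0] by simp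
lemma d01: "d \<in> {e..1}" using ed d1 by simp
lemma a01: "a \<in> {0..e}" using ae a0 by simp

lemma Wes: "W n \<in> {e..1}" using We W01 by simp
lemma Ves: "Vn n \<in> {0..e}" using Ve V01 by simp

lemma dw: "U d w = d"
proof -
  have "(\<lambda>n. U (W n) w) \<longlonglongrightarrow> U d w"
    by (rule lim2[OF cS W_lim tendsto_const]) (use Wes d01 ew w01 in auto)
  moreover have "(\<lambda>n. U (W n) w) = (\<lambda>n. W (Suc n))"
    using C.comm[OF W01 w01] by simp
  ultimately have "(\<lambda>n. W (Suc n)) \<longlonglongrightarrow> U d w" by simp
  then show ?thesis using LIMSEQ_unique[OF _ LIMSEQ_Suc[OF W_lim]] by blast
qed

lemma av: "U a v = a"
proof -
  have "(\<lambda>n. U (Vn n) v) \<longlonglongrightarrow> U a v"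
    by (rule lim2[OF cT V_lim tendsto_const]) (use Ves a01 ve v01 in auto)
  moreover have "(\<lambda>n. U (Vn n) v) = (\<lambda>n. Vn (Suc n))"
    using C.comm[OF V01 v01] by simp
  ultimately have "(\<lambda>n. Vn (Suc n)) \<longlonglongrightarrow> U a v" by simp
  then show ?thesis using LIMSEQ_unique[OF _ LIMSEQ_Suc[OF V_lim]] by blast
qed

lemma d01': "d \<in> {0..1}" using d01 e0 by auto
lemma a01': "a \<in> {0..1}" using a01 e1 by auto

lemma dv: "U d v = d"
  using C.assoc[OF d01' w01 v01] dw wv C.neut2[OF d01'] by simp
lemma aw: "U a w = a"
  using C.assoc[OF a01' v01 w01] av C.comm[OF w01 v01] wv C.neut2[OF a01'] by simp

lemma dW: "U d (W n) = d"
proof (induction n)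
  case 0 then show ?case using C.neut2[OF d01'] by simp
next
  case (Suc n)
  have "U d (W (Suc n)) = U (U d w) (W n)" using C.assoc[OF d01' w01 W01] by simp
  then show ?case using dw Suc by simp
qed

lemma aV: "U a (Vn n) = a"
proof (induction n)
  case 0 then show ?case using C.neut2[OF a01'] by simp
next
  case (Suc n)
  have "U a (Vn (Suc n)) = U (U a v) (Vn n)" using C.assoc[OF a01' v01 V01] by simp
  then show ?case using av Suc by simp
qed

lemma dd: "U d d = d"
proof -
  have "(\<lambda>n. U d (W n)) \<longlonglongrightarrow> U d d"
    by (rule lim2[OF cS tendsto_const W_lim]) (use Wes d01 in auto)
  hence "(\<lambda>n. d) \<longlonglongrightarrow> U d d" using dW by simp
  then show ?thesis using LIMSEQ_unique[OF _ tendsto_const] by blast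
qed

lemma aa: "U a a = a"
proof -
  have "(\<lambda>n. U a (Vn n)) \<longlonglongrightarrow> U a a"
    by (rule lim2[OF cT tendsto_const V_lim]) (use Ves a01 in auto)
  hence "(\<lambda>n. a) \<longlonglongrightarrow> U a a" using aV by simp
  then show ?thesis using LIMSEQ_unique[OF _ tendsto_const] by blast
qed

end


lemma slice:
  assumes c: "continuous_on (K \<times> K) (\<lambda>(x, y). U x y)" and x: "x \<in> K" and S: "S \<subseteq> K"
  shows "continuous_on S (\<lambda>z. U x z)"
proof -
  have "continuous_on S (\<lambda>z. (\<lambda>(x, y). U x y) (x, z))"
    by (rule continuous_on_compose2[OF c]) (use x S in \<open>auto intro!: continuous_intros\<close>)
  then show ?thesis by simp
qed

lemma diag:
  assumes c: "continuous_on (K \<times> K) (\<lambda>(x, y). U x y)" and S: "S \<subseteq> K"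
  shows "continuous_on S (\<lambda>z. U z z)"
proof -
  have "continuous_on S (\<lambda>z. (\<lambda>(x, y). U x y) (z, z))"
    by (rule continuous_on_compose2[OF c]) (use S in \<open>auto intro!: continuous_intros\<close>)
  then show ?thesis by simp
qed

context sett
begin

lemma A01: "x \<in> {a<..<d} \<Longrightarrow> x \<in> {0..1}" using a01' d01' by auto
lemma W_A: "W n \<in> {a<..<d}" using We[of n] W_less_d[of n] ae by auto
lemma V_A: "Vn n \<in> {a<..<d}" using Ve[of n] a_less_V[of n] ed by auto
lemma e_A: "e \<in> {a<..<d}" using ae ed by auto

lemma archW: "x \<in> {a<..<d} \<Longrightarrow> \<exists>n. x \<le> W n"
proof -
  assume "x \<in> {a<..<d}"
  hence "x < (SUP n. W n)" using d_def by simp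
  then obtain n where "x < W n" using less_cSUP_iff[OF _ W_bdd] by blast
  then show ?thesis by (auto intro: less_imp_le)
qed

lemma archV: "x \<in> {a<..<d} \<Longrightarrow> \<exists>n. Vn n \<le> x"
proof -
  assume "x \<in> {a<..<d}"
  hence "(INF n. Vn n) < x" using a_def by simp
  then obtain n where "Vn n < x" using cINF_less_iff[OF _ V_bdd] by blast
  then show ?thesis by (auto intro: less_imp_le)
qed

lemma A_cl: "x \<in> {a<..<d} \<Longrightarrow> y \<in> {a<..<d} \<Longrightarrow> U x y \<in> {a<..<d}"
proof -
  assume x: "x \<in> {a<..<d}" and y: "y \<in> {a<..<d}"
  obtain n m where nm: "x \<le> W n" "y \<le> W m" using archW x y by metis
  obtain n' m' where nm': "Vn n' \<le> x" "Vn m' \<le> y" using archV x y by metis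
  have "U x y \<le> U (W n) (W m)" by (rule C.mono12) (use A01 x y W01 nm in auto)
  also have "\<dots> = W (n + m)" by (rule C.npow_add[OF w01, symmetric])
  finally have u: "U x y < d" using W_less_d[of "n + m"] by simp
  have "U (Vn n') (Vn m') \<le> U x y" by (rule C.mono12) (use A01 x y V01 nm' in auto)
  moreover have "U (Vn n') (Vn m') = Vn (n' + m')" by (rule C.npow_add[OF v01, symmetric])
  ultimately have l: "a < U x y" using a_less_V[of "n' + m'"] by simp
  show ?thesis using u l by simp
qed

lemma A_inv: "x \<in> {a<..<d} \<Longrightarrow> \<exists>y\<in>{a<..<d}. U x y = e"
proof -
  assume x: "x \<in> {a<..<d}"
  have x01: "x \<in> {0..1}" using A01 x .
  show ?thesis
  proof (cases "e \<le> x")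
    case True
    obtain n where n: "x \<le> W n" using archW x by blast
    have c: "continuous_on {e..W n} (\<lambda>z. U x z)"
      by (rule slice[OF cS]) (use True x01 W01 in auto)
    have "U x e \<le> W n" using C.neut2[OF x01] n by simp
    moreover have "W n \<le> U x (W n)" using C.mono[OF e01 x01 W01 True] C.neut[OF W01] by simp
    moreover have "e \<le> W n" by (rule We)
    ultimately obtain z where z: "e \<le> z" "z \<le> W n" "U x z = W n"
      using IVT'[of "\<lambda>z. U x z" e "W n" "W n", OF _ _ _ c] by blast
    have z01: "z \<in> {0..1}" using z W01[of n] e01 by auto
    define y where "y = U z (Vn n)"
    have y01: "y \<in> {0..1}" using y_def C.cl[OF z01 V01] by simp
    have "U x y = U (U x z) (Vn n)" using C.assoc[OF x01 z01 V01] y_def by simp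
    hence xy: "U x y = e" using z WV by simp
    have "Vn n \<le> y" using C.mono[OF e01 z01 V01 z(1)] C.neut[OF V01] y_def by simp
    hence "a < y" using a_less_V[of n] by simp
    moreover have "y \<le> e" using C.mono[OF z01 W01[of n] V01[of n] z(2)] WV[of n] y_def by simp
    ultimately have "y \<in> {a<..<d}" using ed by simp
    then show ?thesis using xy by blast
  next
    case False
    hence xe: "x \<le> e" by simp
    obtain n where n: "Vn n \<le> x" using archV x by blast
    have c: "continuous_on {Vn n..e} (\<lambda>z. U x z)"
      by (rule slice[OF cT]) (use xe x01 V01 in auto)
    have "U x (Vn n) \<le> Vn n" using C.mono[OF x01 e01 V01 xe] C.neut[OF V01] by simp
    moreover have "Vn n \<le> U x e" using C.neut2[OF x01] n by simp
    moreover have "Vn n \<le> e" by (rule Ve)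
    ultimately obtain z where z: "Vn n \<le> z" "z \<le> e" "U x z = Vn n"
      using IVT'[of "\<lambda>z. U x z" "Vn n" "Vn n" e, OF _ _ _ c] by blast
    have z01: "z \<in> {0..1}" using z V01[of n] e01 by auto
    define y where "y = U z (W n)"
    have "U x y = U (U x z) (W n)" using C.assoc[OF x01 z01 W01] y_def by simp
    hence xy: "U x y = e" using z WV C.comm[OF W01 V01] by simp
    have "y \<le> W n" using C.mono[OF z01 e01 W01 z(2)] C.neut[OF W01] y_def by simp
    hence "y < d" using W_less_d[of n] by simp
    moreover have "e \<le> y" using C.mono[OF V01[of n] z01 W01[of n] z(1)] WV[of n] C.comm[OF W01[of n] V01[of n]] y_def by simp
    ultimately have "y \<in> {a<..<d}" using ae by simp
    then show ?thesis using xy by blast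
  qed
qed

lemma A_root: "x \<in> {a<..<d} \<Longrightarrow> e < x \<Longrightarrow> \<exists>z\<in>{a<..<d}. U z z = x"
proof -
  assume x: "x \<in> {a<..<d}" and ex: "e < x"
  have x01: "x \<in> {0..1}" using A01 x .
  have c: "continuous_on {e..x} (\<lambda>z. U z z)" by (rule diag[OF cS]) (use x01 in auto)
  have "U e e \<le> x" using C.neut[OF e01] ex by simp
  moreover have "x \<le> U x x" using C.mono2[OF e01 x01 x01] ex C.neut2[OF x01] by simp
  ultimately obtain z where z: "e \<le> z" "z \<le> x" "U z z = x"
    using IVT'[of "\<lambda>z. U z z" e x x, OF _ _ _ c] ex by auto
  then have "z \<in> {a<..<d}" using x ae by auto
  then show ?thesis using z by blast
qed

lemma A_arch_gen: "x \<in> {a<..<d} \<Longrightarrow> z \<in> {a<..<d} \<Longrightarrow> e < z \<Longrightarrow> \<exists>n. x \<le> npow U e z n"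
proof -
  assume x: "x \<in> {a<..<d}" and z: "z \<in> {a<..<d}" and ez: "e < z"
  have z01: "z \<in> {0..1}" using A01 z .
  define Z where "Z n = npow U e z n" for n
  have Z01: "Z n \<in> {0..1}" for n unfolding Z_def by (rule C.npow_in[OF z01])
  have Ze: "e \<le> Z n" for n using C.npow_mono_n[OF z01, of 0 n] ez by (simp add: Z_def)
  have inc: "incseq Z" unfolding Z_def using C.npow_mono_n[OF z01] ez by (simp add: incseq_def)
  have bdd: "bdd_above (range Z)" using Z01 by (auto intro!: bdd_aboveI[of _ 1])
  define L where "L = (SUP n. Z n)"
  have lim: "Z \<longlonglongrightarrow> L" unfolding L_def by (rule LIMSEQ_incseq_SUP[OF bdd inc])
  have L1: "L \<le> 1" unfolding L_def using Z01 by (intro cSUP_least) auto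
  have eL: "e \<le> L" unfolding L_def using Ze cSUP_upper[OF _ bdd] by (meson UNIV_I order_trans)
  have "(\<lambda>n. U (Z n) z) \<longlonglongrightarrow> U L z"
    by (rule lim2[OF cS lim tendsto_const]) (use Ze Z01 eL L1 z01 ez in auto)
  moreover have "(\<lambda>n. U (Z n) z) = (\<lambda>n. Z (Suc n))" unfolding Z_def using C.comm[OF C.npow_in[OF z01] z01] by simp
  ultimately have "(\<lambda>n. Z (Suc n)) \<longlonglongrightarrow> U L z" by simp
  hence Lz: "U L z = L" using LIMSEQ_unique[OF _ LIMSEQ_Suc[OF lim]] by blast
  have "x < L"
  proof (rule ccontr)
    assume "\<not> x < L"
    hence LA: "L \<in> {a<..<d}" using x eL ae by auto
    obtain L' where L': "L' \<in> {a<..<d}" "U L L' = e" using A_inv LA by blast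
    have L01: "L \<in> {0..1}" and L'01: "L' \<in> {0..1}" using A01 LA L' by auto
    have "z = U (U L' L) z" using C.comm[OF L01 L'01] L' C.neut[OF z01] by simp
    also have "\<dots> = U L' (U L z)" using C.assoc[OF L'01 L01 z01] by simp
    also have "\<dots> = e" using Lz L' C.comm[OF L01 L'01] by simp
    finally show False using ez by simp
  qed
  then obtain n where "x < Z n" unfolding L_def using less_cSUP_iff[OF _ bdd] by blast
  then show ?thesis unfolding Z_def by (auto intro: less_imp_le)
qed

lemma ogrp_inst: "ogrp {a<..<d} U e w v a d"
proof -
  have cm: "cmon {a<..<d} U e"
    unfolding cmon_def
    using A_cl e_A C.assoc C.comm C.neut C.mono A01 by meson
  show ?thesis
    unfolding ogrp_def ogrp_axioms_def
    using cm A_inv W_A[of 1] V_A[of 1] wv ew archW archV A_arch_gen A_root C.neut2[OF w01] C.neut2[OF v01]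
    by auto
qed

lemma exists_h: "\<exists>h :: real \<Rightarrow> real. strict_mono_on {a<..<d} h \<and>
   (\<forall>x\<in>{a<..<d}. \<forall>y\<in>{a<..<d}. h (U x y) = h x + h y) \<and> (\<forall>r. \<exists>x\<in>{a<..<d}. h x = r)"
  using ogrp.holder[OF ogrp_inst] by blast

lemma out_fix: "x \<in> {0..a} \<union> {d..1} \<Longrightarrow> U x v = x \<and> U x w = x"
proof -
  assume "x \<in> {0..a} \<union> {d..1}"
  then consider "x \<in> {0..a}" | "x \<in> {d..1}" by blast
  then show ?thesis
  proof cases
    case 1
    have c: "continuous_on {0..e} (\<lambda>z. U a z)" by (rule slice[OF cT]) (use a01 in auto)
    have "U a 0 \<le> U e 0" using C.mono[OF a01' e01 _ ] a01 by simp
    hence "U a 0 \<le> x" using C.neut[of 0] 1 by simp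
    moreover have "x \<le> U a e" using 1 C.neut2[OF a01'] by simp
    ultimately obtain z where z: "0 \<le> z" "z \<le> e" "U a z = x"
      using IVT'[of "\<lambda>z. U a z" 0 x e, OF _ _ _ c] e0 by auto
    have z01: "z \<in> {0..1}" using z e1 by auto
    have "U x v = U (U a v) z" using z C.assoc[OF a01' z01 v01] C.assoc[OF a01' v01 z01] C.comm[OF z01 v01] by simp
    moreover have "U x w = U (U a w) z" using z C.assoc[OF a01' z01 w01] C.assoc[OF a01' w01 z01] C.comm[OF z01 w01] by simp
    ultimately show ?thesis using av aw z by simp
  next
    case 2
    have c: "continuous_on {e..1} (\<lambda>z. U d z)" by (rule slice[OF cS]) (use d01 in auto)
    have "U e 1 \<le> U d 1" using C.mono[OF e01 d01' _ ] d01 by simp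
    hence "x \<le> U d 1" using C.neut[of 1] 2 by simp
    moreover have "U d e \<le> x" using 2 C.neut2[OF d01'] by simp
    ultimately obtain z where z: "e \<le> z" "z \<le> 1" "U d z = x"
      using IVT'[of "\<lambda>z. U d z" e x 1, OF _ _ _ c] e1 by auto
    have z01: "z \<in> {0..1}" using z e0 by auto
    have "U x v = U (U d v) z" using z C.assoc[OF d01' z01 v01] C.assoc[OF d01' v01 z01] C.comm[OF z01 v01] by simp
    moreover have "U x w = U (U d w) z" using z C.assoc[OF d01' z01 w01] C.assoc[OF d01' w01 z01] C.comm[OF z01 w01] by simp
    ultimately show ?thesis using dv dw z by simp
  qed
qed

end

lemma tau_cont:
  assumes un: "uninorm U e" and c: "c \<in> {0..1}" and c': "c' \<in> {0..1}" and cc: "U c c' = e"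
  shows "continuous_on {0..1} (\<lambda>x. U x c)"
proof -
  interpret C: cmon "{0..1}" U e by (rule uninorm_cmon[OF un])
  show ?thesis
  proof (rule mono_bij_cont)
    show "U x c \<le> U y c" if "x \<in> {0..1}" "y \<in> {0..1}" "x \<le> y" for x y using C.mono that c by blast
    show "U x c \<in> {0..1}" if "x \<in> {0..1}" for x using C.cl that c by blast
    show "\<exists>x\<in>{0..1}. U x c = y" if y: "y \<in> {0..1}" for y
    proof (intro bexI)
      show "U (U y c') c = y" using C.assoc[OF y c' c] C.comm[OF c c'] cc C.neut2[OF y] by simp
      show "U y c' \<in> {0..1}" using C.cl y c' by blast
    qed
  qed
qed


lemma comp_cont:
  fixes U :: "real \<Rightarrow> real \<Rightarrow> real" and S :: "(real \<times> real) set"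
  assumes g1: "continuous_on S g1" and g2: "continuous_on S g2"
    and i1: "g1 ` S \<subseteq> K" and i2: "g2 ` S \<subseteq> K"
    and cU: "continuous_on (K \<times> K) (\<lambda>(x, y). U x y)"
    and ct: "continuous_on {0..1} \<tau>" and Ui: "\<And>x y. x \<in> K \<Longrightarrow> y \<in> K \<Longrightarrow> U x y \<in> {0..1}"
  shows "continuous_on S (\<lambda>z. \<tau> (U (g1 z) (g2 z)))"
proof -
  have "continuous_on S (\<lambda>z. (\<lambda>(x, y). U x y) (g1 z, g2 z))"
    by (rule continuous_on_compose2[OF cU]) (use g1 g2 i1 i2 in \<open>auto intro!: continuous_intros\<close>)
  hence c1: "continuous_on S (\<lambda>z. U (g1 z) (g2 z))" by simp
  have "U (g1 z) (g2 z) \<in> {0..1}" if "z \<in> S" for z using Ui i1 i2 that by blast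
  hence "(\<lambda>z. U (g1 z) (g2 z)) ` S \<subseteq> {0..1}" by blast
  then show ?thesis
    by (rule continuous_on_compose2[OF ct c1])
qed

theorem mainTheorem7:
  fixes N1 N2 :: "real \<Rightarrow> real" and U1 U2 :: "real \<Rightarrow> real \<Rightarrow> real" and e1 e2 :: real
  assumes "fuzzy_negation N1" "continuous_on {0..1} N1"
    and "fuzzy_negation N2" "continuous_on {0..1} N2"
    and "uninorm U1 e1" "disjunctive U1" "0 < e1" "e1 < 1"
    and "uninorm U2 e2" "disjunctive U2" "0 < e2" "e2 < 1"
    and "\<forall>x\<in>{0..1}. \<forall>y\<in>{0..1}. U1 (N1 x) y = U2 (N2 x) y"
    and "continuous_underlying U1 e1"
    and "\<exists>x\<in>{0..1}. N1 x \<noteq> N2 x"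
  shows "continuous_underlying U2 e2 \<and>
    (\<exists>a d. idempotent_point U1 a \<and> idempotent_point U1 d \<and> a < d \<and>
       (\<exists>V1 f1. representable V1 f1 \<and> linear_transform_on U1 a d V1) \<and>
       (\<exists>V2 f2. representable V2 f2 \<and> linear_transform_on U2 a d V2) \<and>
       (\<forall>x\<in>{0..a} \<union> {d..1}. \<forall>y\<in>{0..a} \<union> {d..1}. U1 x y = U2 x y))"
proof -
  note A = assms
  interpret C1: cmon "{0..1}" U1 e1 by (rule uninorm_cmon[OF A(5)])
  interpret C2: cmon "{0..1}" U2 e2 by (rule uninorm_cmon[OF A(9)])
  have e1i: "e1 \<in> {0..1}" and e2i: "e2 \<in> {0..1}" using A by auto
  have N1i: "N1 x \<in> {0..1}" if "x \<in> {0..1}" for x using A(1) that unfolding fuzzy_negation_def by blast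
  have N2i: "N2 x \<in> {0..1}" if "x \<in> {0..1}" for x using A(3) that unfolding fuzzy_negation_def by blast
  have N2onto: "\<exists>x\<in>{0..1}. N2 x = s" if s: "s \<in> {0..1}" for s
  proof -
    have "N2 1 \<le> s" "s \<le> N2 0" using A(3) s unfolding fuzzy_negation_def by auto
    then obtain x where "0 \<le> x" "x \<le> 1" "N2 x = s" using IVT2'[of N2 1 s 0] A(4) by auto
    then show ?thesis by auto
  qed
  have B: "U2 s y = U1 (U2 s e1) y" if s: "s \<in> {0..1}" and y: "y \<in> {0..1}" for s y
  proof -
    obtain x where x: "x \<in> {0..1}" "N2 x = s" using N2onto s by blast
    have h1: "U1 (N1 x) y = U2 s y" using A(13) x y by auto
    have "U1 (N1 x) e1 = U2 s e1" using A(13) x e1i by auto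
    hence "N1 x = U2 s e1" using C1.neut2[OF N1i[OF x(1)]] by simp
    then show ?thesis using h1 by simp
  qed
  have e12: "e1 \<noteq> e2"
  proof
    assume eq: "e1 = e2"
    obtain x where x: "x \<in> {0..1}" "N1 x \<noteq> N2 x" using A(15) by blast
    have "U1 (N1 x) e2 = U2 (N2 x) e2" using A(13) x e2i by auto
    then show False using C1.neut2[OF N1i[OF x(1)]] C2.neut2[OF N2i[OF x(1)]] eq x by simp
  qed
  define u where "u = U2 e1 e1"
  have ui: "u \<in> {0..1}" unfolding u_def using C2.cl e1i by blast
  have ue: "U1 u e2 = e1" using B[OF e1i e2i] C2.neut2[OF e1i] u_def by simp
  have eu: "U1 e2 u = e1" using ue C1.comm[OF ui e2i] by simp
  have fs: "U2 s e1 = U1 s u" if s: "s \<in> {0..1}" for s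
  proof -
    define f where "f = U2 s e1"
    have fi: "f \<in> {0..1}" unfolding f_def using C2.cl s e1i by blast
    have sf: "U1 f e2 = s" using B[OF s e2i] C2.neut2[OF s] f_def by simp
    have "f = U1 f (U1 e2 u)" using eu C1.neut2[OF fi] by simp
    also have "\<dots> = U1 s u" using C1.assoc[OF fi e2i ui] sf by simp
    finally show ?thesis unfolding f_def .
  qed
  have U2f: "U2 s y = U1 (U1 s u) y" if "s \<in> {0..1}" "y \<in> {0..1}" for s y
    using B[OF that] fs[OF that(1)] by simp
  define w where "w = (if e1 < e2 then e2 else u)"
  define v where "v = (if e1 < e2 then u else e2)"
  have wi: "w \<in> {0..1}" and vi: "v \<in> {0..1}" using e2i ui by (auto simp: w_def v_def)
  have wv: "U1 w v = e1" using ue eu by (auto simp: w_def v_def)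
  have ew: "e1 < w"
  proof (cases "e1 < e2")
    case True then show ?thesis by (simp add: w_def)
  next
    case False
    hence e21: "e2 < e1" using e12 by simp
    have "e1 < u"
    proof (rule ccontr)
      assume "\<not> e1 < u"
      hence "U1 u e2 \<le> U1 e1 e2" using C1.mono[OF ui e1i e2i] by simp
      then show False using ue C1.neut[OF e2i] e21 by simp
    qed
    then show ?thesis using False by (simp add: w_def)
  qed
  interpret S: sett U1 e1 w v
    by unfold_locales (use A wi vi wv ew in auto)
  have wA: "w \<in> {S.a<..<S.d}" using S.W_A[of 1] C1.neut2[OF wi] by simp
  have vA: "v \<in> {S.a<..<S.d}" using S.V_A[of 1] C1.neut2[OF vi] by simp
  have uA: "u \<in> {S.a<..<S.d}" and e2A: "e2 \<in> {S.a<..<S.d}" using wA vA by (auto simp: w_def v_def split: if_splits)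
  have tu: "continuous_on {0..1} (\<lambda>x. U1 x u)" by (rule tau_cont[OF A(5) ui e2i ue])
  have te: "continuous_on {0..1} (\<lambda>x. U1 x e2)" by (rule tau_cont[OF A(5) e2i ui eu])
  have U2id: "U2 p q = U1 (U1 (U1 p u) (U1 q u)) e2" if p: "p \<in> {0..1}" and q: "q \<in> {0..1}" for p q
  proof -
    have pu: "U1 p u \<in> {0..1}" and qu: "U1 q u \<in> {0..1}" using C1.cl p q ui by auto
    have "U1 (U1 (U1 p u) (U1 q u)) e2 = U1 (U1 p u) (U1 (U1 q u) e2)" using C1.assoc[OF pu qu e2i] .
    also have "U1 (U1 q u) e2 = q" using C1.assoc[OF q ui e2i] ue C1.neut2[OF q] by simp
    finally show ?thesis using U2f[OF p q] by simp
  qed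
  have cT: "continuous_on ({0..e1} \<times> {0..e1}) (\<lambda>(x, y). U1 x y)" by (rule S.cT)
  have cS: "continuous_on ({e1..1} \<times> {e1..1}) (\<lambda>(x, y). U1 x y)" by (rule S.cS)
  have mono_u: "U1 x u \<le> U1 y u" if "x \<in> {0..1}" "y \<in> {0..1}" "x \<le> y" for x y
    using C1.mono that ui by blast
  have cont1: "continuous_on ({0..1} \<times> {0..1}) (\<lambda>(x, y). underlying_tnorm U2 e2 x y)"
  proof -
    let ?g1 = "\<lambda>z::real \<times> real. U1 (e2 * fst z) u"
    let ?g2 = "\<lambda>z::real \<times> real. U1 (e2 * snd z) u"
    have m: "e2 * t \<in> {0..1}" if "t \<in> {0..1}" for t using that A(11,12)
      by (auto simp: mult_le_one)
    have g1: "continuous_on ({0..1} \<times> {0..1}) ?g1"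
      by (rule continuous_on_compose2[OF tu]) (use m in \<open>auto intro!: continuous_intros\<close>)
    have g2: "continuous_on ({0..1} \<times> {0..1}) ?g2"
      by (rule continuous_on_compose2[OF tu]) (use m in \<open>auto intro!: continuous_intros\<close>)
    have rng: "U1 (e2 * t) u \<in> {0..e1}" if "t \<in> {0..1}" for t
    proof -
      have "U1 (e2 * t) u \<le> U1 e2 u" using mono_u[OF m[OF that] e2i] that A(11) by (auto simp: mult_le_cancel_left1)
      moreover have "U1 (e2 * t) u \<in> {0..1}" using C1.cl m[OF that] ui by blast
      ultimately show ?thesis using eu by simp
    qed
    have "continuous_on ({0..1} \<times> {0..1}) (\<lambda>z. (\<lambda>x. U1 x e2) (U1 (?g1 z) (?g2 z)))"
      by (rule comp_cont[OF g1 g2 _ _ cT te]) (use rng C1.cl e1i in \<open>auto\<close>)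
    hence "continuous_on ({0..1} \<times> {0..1}) (\<lambda>z. U1 (U1 (?g1 z) (?g2 z)) e2 / e2)"
      by (intro continuous_intros) (use A(11) in auto)
    then show ?thesis
      by (rule continuous_on_eq) (use U2id m in \<open>auto simp: underlying_tnorm_def\<close>)
  qed
  have cont2: "continuous_on ({0..1} \<times> {0..1}) (\<lambda>(x, y). underlying_tconorm U2 e2 x y)"
  proof -
    let ?g1 = "\<lambda>z::real \<times> real. U1 (e2 + (1 - e2) * fst z) u"
    let ?g2 = "\<lambda>z::real \<times> real. U1 (e2 + (1 - e2) * snd z) u"
    have m: "e2 + (1 - e2) * t \<in> {e2..1}" if "t \<in> {0..1}" for t using that A(11,12)
    proof -
      have "(1 - e2) * t \<le> (1 - e2) * 1" using that A(12) by (intro mult_left_mono) auto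
      moreover have "0 \<le> (1 - e2) * t" using that A(12) by simp
      ultimately show ?thesis by simp
    qed
    have m': "e2 + (1 - e2) * t \<in> {0..1}" if "t \<in> {0..1}" for t using m[OF that] A(11) by auto
    have g1: "continuous_on ({0..1} \<times> {0..1}) ?g1"
      by (rule continuous_on_compose2[OF tu]) (use m' in \<open>auto intro!: continuous_intros\<close>)
    have g2: "continuous_on ({0..1} \<times> {0..1}) ?g2"
      by (rule continuous_on_compose2[OF tu]) (use m' in \<open>auto intro!: continuous_intros\<close>)
    have rng: "U1 (e2 + (1 - e2) * t) u \<in> {e1..1}" if "t \<in> {0..1}" for t
    proof -
      have "U1 e2 u \<le> U1 (e2 + (1 - e2) * t) u" using mono_u[OF e2i m'[OF that]] m[OF that] by auto
      moreover have "U1 (e2 + (1 - e2) * t) u \<in> {0..1}" using C1.cl m'[OF that] ui by blast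
      ultimately show ?thesis using eu by simp
    qed
    have "continuous_on ({0..1} \<times> {0..1}) (\<lambda>z. (\<lambda>x. U1 x e2) (U1 (?g1 z) (?g2 z)))"
      by (rule comp_cont[OF g1 g2 _ _ cS te]) (use rng C1.cl e1i in \<open>auto\<close>)
    hence "continuous_on ({0..1} \<times> {0..1}) (\<lambda>z. (U1 (U1 (?g1 z) (?g2 z)) e2 - e2) / (1 - e2))"
      by (intro continuous_intros) (use A(12) in auto)
    then show ?thesis
      by (rule continuous_on_eq) (use U2id m' in \<open>auto simp: underlying_tconorm_def\<close>)
  qed
  have CU2: "continuous_underlying U2 e2"
    unfolding continuous_underlying_def using cont1 cont2 by blast
  obtain h :: "real \<Rightarrow> real" where h: "strict_mono_on {S.a<..<S.d} h"
    "\<forall>x\<in>{S.a<..<S.d}. \<forall>y\<in>{S.a<..<S.d}. h (U1 x y) = h x + h y" "\<forall>r. \<exists>x\<in>{S.a<..<S.d}. h x = r"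
    using S.exists_h by blast
  have ad: "S.a < S.d" using S.ae S.ed by simp
  have R1: "\<exists>V1 f1. representable V1 f1 \<and> linear_transform_on U1 S.a S.d V1"
    by (rule make_repr[OF ad h(1) h(3)]) (use h(2) S.A_cl in blast)
  have "h (U1 e1 e1) = h e1 + h e1" using h(2) S.e_A by blast
  hence he1: "h e1 = 0" using C1.neut[OF e1i] by simp
  have "h (U1 u e2) = h u + h e2" using h(2) uA e2A by blast
  hence hu: "h u = - h e2" using ue he1 by simp
  have R2: "\<exists>V2 f2. representable V2 f2 \<and> linear_transform_on U2 S.a S.d V2"
  proof (rule make_repr[OF ad, of "\<lambda>x. h x - h e2"])
    show "strict_mono_on {S.a<..<S.d} (\<lambda>x. h x - h e2)"
      using h(1) by (simp add: strict_mono_on_def)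
    show "\<forall>r. \<exists>x\<in>{S.a<..<S.d}. h x - h e2 = r"
    proof
      fix r obtain x where x: "x \<in> {S.a<..<S.d}" "h x = r + h e2" using h(3) by blast
      hence "h x - h e2 = r" by simp
      then show "\<exists>x\<in>{S.a<..<S.d}. h x - h e2 = r" using x(1) by blast
    qed
    show "\<forall>x\<in>{S.a<..<S.d}. \<forall>y\<in>{S.a<..<S.d}. U2 x y \<in> {S.a<..<S.d} \<and> h (U2 x y) - h e2 = h x - h e2 + (h y - h e2)"
    proof (intro ballI conjI)
      fix x y assume x: "x \<in> {S.a<..<S.d}" and y: "y \<in> {S.a<..<S.d}"
      have eq: "U2 x y = U1 (U1 x u) y" using U2f S.A01 x y by blast
      have xu: "U1 x u \<in> {S.a<..<S.d}" using S.A_cl[OF x uA] .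
      show "U2 x y \<in> {S.a<..<S.d}" using eq S.A_cl[OF xu y] by simp
      have "h (U2 x y) = h x + h u + h y" using eq h(2) xu x y uA by simp
      then show "h (U2 x y) - h e2 = h x - h e2 + (h y - h e2)" using hu by simp
    qed
  qed
  have out: "U1 x y = U2 x y" if x: "x \<in> {0..S.a} \<union> {S.d..1}" and y: "y \<in> {0..S.a} \<union> {S.d..1}" for x y
  proof -
    have x01: "x \<in> {0..1}" and y01: "y \<in> {0..1}" using x y S.a01' S.d01' by auto
    have "U1 x u = x" using S.out_fix[OF x] by (auto simp: w_def v_def split: if_splits)
    then show ?thesis using U2f[OF x01 y01] by simp
  qed
  have idem: "idempotent_point U1 S.a" "idempotent_point U1 S.d"
    unfolding idempotent_point_def using S.aa S.dd S.a01' S.d01' by auto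
  show ?thesis using CU2 idem ad R1 R2 out by blast
qed


end
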